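(* In the setting described in the context, let $D\subseteq A\subseteq D\cup T$ and $L\in\Pi_A$. Then $\dim\operatorname{span}\langle L,L^*\rangle_A=|L|$ if $L$ is shorted (with respect to $A$), and $\dim\operatorname{span}\langle L,L^*\rangle_A=2|L|-1$ otherwise.
   Context: Let $n\ge4$, $V=\{0,\dots,n-1\}$, and let $E=\{(u,v)\in V\times V:u\ne v\}$ be the set of arcs, written $uv$. Let $\chi_e\in\mathbb R^E$ be unit vectors and $\chi_F=\sum_{e\in F}\chi_e$. Let $\delta^\pm(w)$ be the arcs leaving/entering $w$, let $\delta^+(S)=\{uv:u\in S,v\notin S\}$, let $\mathcal S=\{S\subset V:2\le|S|\le n-2\}$, and let $x(F)=\sum_{e\in F}x_e$. The polytope is $P^n=\{x\in\mathbb R^E: x(\delta^+(w))=x(\delta^-(w))=1\ \forall w,\ x(\delta^+(S))\ge1\ \forall S\in\mathcal S,\ x\ge0\}$. Fix $\bar x\in P^n\cap\{0,\tfrac12\}^E$ and let $E_{\bar x}=\{e:\bar x_e=\tfrac12\}$. For $a\in\{0,1\}^E$ let $\mathrm{pr}(a)=\sum_{e\in E_{\bar x}}a_e\chi_e$. Let $\mathcal S_{\bar x}=\{S\in\mathcal S:\bar x(\delta^+(S))=1\}$. Define the sets $$D=\{\mathrm{pr}(\chi_{\delta^+(u)}),\mathrm{pr}(\chi_{\delta^-(u)}):u\in V\}, \qquad T=\{\mathrm{pr}(\chi_{\delta^+(S)}):S\in\mathcal S_{\bar x}\}.$$ Every vector of $D\cup T$ equals $\chi_{e_1}+\chi_{e_2}$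 for two distinct arcs $e_1,e_2\in E_{\bar x}$; it is written $[e_1,e_2]=[e_2,e_1]$. Let $A$ be a set with $D\subseteq A\subseteq D\cup T$. On $E_{\bar x}$ define the relation $e\sim_A e'$ iff there is $\bar e\in E_{\bar x}$ with $[e,\bar e]\in A$ and $[\bar e,e']\in A$. Let $\equiv_A$ be its transitive closure; this is an equivalence relation. The equivalence classes are called circuits, and they form the circuit partition $\Pi_A$ of $E_{\bar x}$. For $L\in\Pi_A$, the set $\{\bar e\in E_{\bar x}:\exists e\in L,\ [e,\bar e]\in A\}$ is nonempty and contained in a unique circuit, denoted $L^*_A$ and called the dual of $L$. The pair $\{L,L^*_A\}$ is a circuit pair. $L$ is called shorted if $L^*_A=L$. Define $\langle L,L^*\rangle_A=\{[e,\bar e]\in A: e\in L,\ \bar e\in L^*_A\}$. *)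

theory Defs
  imports "HOL-Analysis.Analysis" "HOL-Library.Function_Algebras"
begin

type_synonym arc = "nat \<times> nat"
type_synonym vec = "arc \<Rightarrow> real"

definition V :: "nat \<Rightarrow> nat set" where "V n = {0..<n}"

definition arcs :: "nat \<Rightarrow> arc set" where
  "arcs n = {(u,v). u \<in> V n \<and> v \<in> V n \<and> u \<noteq> v}"

definition delta_out :: "nat \<Rightarrow> nat \<Rightarrow> arc set" where
  "delta_out n w = {(u,v) \<in> arcs n. u = w}"

definition delta_in :: "nat \<Rightarrow> nat \<Rightarrow> arc set" where
  "delta_in n w = {(u,v) \<in> arcs n. v = w}"

definition delta_out_set :: "nat \<Rightarrow> nat set \<Rightarrow> arc set" where
  "delta_out_set n S = {(u,v) \<in> arcs n. u \<in> S \<and> v \<notin> S}"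

definition cutsets :: "nat \<Rightarrow> nat set set" where
  "cutsets n = {S. S \<subseteq> V n \<and> 2 \<le> card S \<and> card S \<le> n - 2}"

definition xsum :: "vec \<Rightarrow> arc set \<Rightarrow> real" where
  "xsum x F = (\<Sum>e\<in>F. x e)"

text \<open>The polytope P^n; vectors x in R^E are functions on arcs (values off E are irrelevant).\<close>
definition Pn :: "nat \<Rightarrow> vec set" where
  "Pn n = {x. (\<forall>w\<in>V n. xsum x (delta_out n w) = 1 \<and> xsum x (delta_in n w) = 1)
            \<and> (\<forall>S\<in>cutsets n. xsum x (delta_out_set n S) \<ge> 1)
            \<and> (\<forall>e\<in>arcs n. x e \<ge> 0)}"

definition chi :: "arc set \<Rightarrow> vec" where
  "chi F = (\<lambda>e. if e \<in> F then 1 else 0)"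

definition Ehalf :: "nat \<Rightarrow> vec \<Rightarrow> arc set" where
  "Ehalf n x = {e \<in> arcs n. x e = 1/2}"

definition pr :: "nat \<Rightarrow> vec \<Rightarrow> vec \<Rightarrow> vec" where
  "pr n x a = (\<lambda>e. if e \<in> Ehalf n x then a e else 0)"

definition tight_sets :: "nat \<Rightarrow> vec \<Rightarrow> nat set set" where
  "tight_sets n x = {S \<in> cutsets n. xsum x (delta_out_set n S) = 1}"

definition Dset :: "nat \<Rightarrow> vec \<Rightarrow> vec set" where
  "Dset n x = {pr n x (chi (delta_out n u)) | u. u \<in> V n}
            \<union> {pr n x (chi (delta_in n u)) | u. u \<in> V n}"

definition Tset :: "nat \<Rightarrow> vec \<Rightarrow> vec set" where
  "Tset n x = {pr n x (chi (delta_out_set n S)) | S. S \<in> tight_sets n x}"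

definition pairvec :: "arc \<Rightarrow> arc \<Rightarrow> vec" where
  "pairvec e1 e2 = (\<lambda>a. chi {e1} a + chi {e2} a)"

definition simrel :: "nat \<Rightarrow> vec \<Rightarrow> vec set \<Rightarrow> arc rel" where
  "simrel n x A = {(e, e'). e \<in> Ehalf n x \<and> e' \<in> Ehalf n x \<and>
      (\<exists>eb\<in>Ehalf n x. pairvec e eb \<in> A \<and> pairvec eb e' \<in> A)}"

definition equivrel :: "nat \<Rightarrow> vec \<Rightarrow> vec set \<Rightarrow> arc rel" where
  "equivrel n x A = trancl (simrel n x A)"

definition circuits :: "nat \<Rightarrow> vec \<Rightarrow> vec set \<Rightarrow> arc set set" where
  "circuits n x A = Ehalf n x // equivrel n x A"

definition neighbours :: "nat \<Rightarrow> vec \<Rightarrow> vec set \<Rightarrow> arc set \<Rightarrow> arc set" where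
  "neighbours n x A L = {eb \<in> Ehalf n x. \<exists>e\<in>L. pairvec e eb \<in> A}"

definition dual :: "nat \<Rightarrow> vec \<Rightarrow> vec set \<Rightarrow> arc set \<Rightarrow> arc set" where
  "dual n x A L = (THE L'. L' \<in> circuits n x A \<and> neighbours n x A L \<subseteq> L')"

definition shorted :: "nat \<Rightarrow> vec \<Rightarrow> vec set \<Rightarrow> arc set \<Rightarrow> bool" where
  "shorted n x A L \<longleftrightarrow> dual n x A L = L"

definition pairset :: "nat \<Rightarrow> vec \<Rightarrow> vec set \<Rightarrow> arc set \<Rightarrow> vec set" where
  "pairset n x A L = {v \<in> A. \<exists>e\<in>L. \<exists>eb\<in>dual n x A L. v = pairvec e eb}"

definition vscale :: "real \<Rightarrow> vec \<Rightarrow> vec" where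
  "vscale c f = (\<lambda>e. c * f e)"

interpretation vec_vs: vector_space vscale
  by unfold_locales (auto simp: vscale_def algebra_simps)

abbreviation vspan :: "vec set \<Rightarrow> vec set" where
  "vspan \<equiv> vec_vs.span"

abbreviation vdim :: "vec set \<Rightarrow> nat" where
  "vdim \<equiv> vec_vs.dim"

end

theory Submission imports Defs begin

lemma pairvec_sym: "pairvec a b = pairvec b a" by (auto simp: pairvec_def fun_eq_iff)
lemma pairvec_chi: "pairvec a b = chi {a} + chi {b}" by (simp add: pairvec_def fun_eq_iff)
lemma chi_single: "chi {a} x = (if x = a then 1 else 0)" by (simp add: chi_def)

lemma finite_arcs: "finite (arcs n)"
  by (rule finite_subset[of _ "V n \<times> V n"]) (auto simp: arcs_def V_def)

lemma finite_Ehalf: "finite (Ehalf n x)"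
  by (rule finite_subset[OF _ finite_arcs[of n]]) (auto simp: Ehalf_def)

lemma sum_fun_app: "(sum g S) a = (\<Sum>y\<in>S. g y a)"
proof (cases "finite S")
  case True then show ?thesis by (induct rule: finite_induct) auto
qed simp

lemma indep_singletons:
  assumes "finite K"
  shows "vec_vs.independent ((\<lambda>a. chi {a}) ` K)"
proof (rule vec_vs.independent_if_scalars_zero)
  show "finite ((\<lambda>a. chi {a}) ` K)" using assms by simp
  fix f x assume sum0: "(\<Sum>y\<in>(\<lambda>a. chi {a}) ` K. vscale (f y) y) = 0"
    and x: "x \<in> (\<lambda>a. chi {a}) ` K"
  then obtain a where a: "a \<in> K" "x = chi {a}" by auto
  let ?Q = "(\<lambda>a. chi {a}) ` K"
  have fQ: "finite ?Q" using assms by simp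
  have "0 = (\<Sum>y\<in>?Q. vscale (f y) y) a" using sum0 by simp
  also have "\<dots> = (\<Sum>y\<in>?Q. f y * y a)" by (simp add: sum_fun_app vscale_def)
  also have "\<dots> = f x * x a + (\<Sum>y\<in>?Q - {x}. f y * y a)"
    using x fQ by (simp add: sum.remove)
  also have "(\<Sum>y\<in>?Q - {x}. f y * y a) = 0"
    by (rule sum.neutral) (auto simp: a chi_single split: if_splits)
  finally show "f x = 0" using a by (simp add: chi_def)
qed

lemma inj_singletons: "inj_on (\<lambda>a. chi {a}) K"
  by (rule inj_onI) (metis chi_single zero_neq_one)

lemma dim_singletons:
  assumes "finite K" shows "vdim (vspan ((\<lambda>a. chi {a}) ` K)) = card K"
  using vec_vs.dim_span_eq_card_independent[OF indep_singletons[OF assms]]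
    card_image[OF inj_singletons] by simp

lemma mem_delta_out: "a \<in> delta_out n w \<longleftrightarrow> a \<in> arcs n \<and> fst a = w"
  by (cases a) (auto simp: delta_out_def)

lemma card_out_half:
  assumes "xb \<in> Pn n" "\<forall>e\<in>arcs n. xb e \<in> {0, 1/2}" "u \<in> V n"
  shows "card {e \<in> Ehalf n xb. fst e = u} = 2"
proof -
  have fin: "finite (delta_out n u)"
    by (rule finite_subset[OF _ finite_arcs[of n]]) (auto simp: mem_delta_out)
  have "1 = xsum xb (delta_out n u)" using assms by (simp add: Pn_def)
  also have "\<dots> = (\<Sum>e\<in>delta_out n u. if xb e = 1/2 then 1/2 else 0)"
    unfolding xsum_def
    by (rule sum.cong) (use assms(2) in \<open>auto simp: mem_delta_out\<close>)
  also have "\<dots> = (\<Sum>e\<in>{e\<in>delta_out n u. xb e = 1/2}. 1/2)"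
    using sum.inter_filter[OF fin, of "\<lambda>_. (1/2::real)" "\<lambda>e. xb e = 1/2"] by simp
  also have "{e\<in>delta_out n u. xb e = 1/2} = {e \<in> Ehalf n xb. fst e = u}"
    by (auto simp: mem_delta_out Ehalf_def)
  finally have "1 = real (card {e \<in> Ehalf n xb. fst e = u}) / 2" by simp
  then show ?thesis by linarith
qed


context
  fixes n :: nat and xb :: vec and A :: "vec set" and part :: "arc \<Rightarrow> arc"
  assumes part_in: "\<And>e. e \<in> Ehalf n xb \<Longrightarrow> part e \<in> Ehalf n xb"
    and part_ne: "\<And>e. e \<in> Ehalf n xb \<Longrightarrow> part e \<noteq> e"
    and part_inv: "\<And>e. e \<in> Ehalf n xb \<Longrightarrow> part (part e) = e"
    and part_A: "\<And>e. e \<in> Ehalf n xb \<Longrightarrow> pairvec e (part e) \<in> A"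
begin

lemma simrel_iff: "(e,e') \<in> simrel n xb A \<longleftrightarrow> e \<in> Ehalf n xb \<and> e' \<in> Ehalf n xb \<and>
   (\<exists>eb\<in>Ehalf n xb. pairvec e eb \<in> A \<and> pairvec eb e' \<in> A)"
  by (simp add: simrel_def)

lemma part_A': "e \<in> Ehalf n xb \<Longrightarrow> pairvec (part e) e \<in> A"
  using part_A pairvec_sym by metis

lemma equivR: "equiv (Ehalf n xb) (equivrel n xb A)"
  unfolding equiv_def refl_on_def equivrel_def
proof (intro conjI ballI)
  show "(simrel n xb A)\<^sup>+ \<subseteq> Ehalf n xb \<times> Ehalf n xb"
    by (rule trancl_subset_Sigma) (auto simp: simrel_iff)
  fix x assume "x \<in> Ehalf n xb"
  then have "(x,x) \<in> simrel n xb A"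
    using part_in[OF \<open>x \<in> Ehalf n xb\<close>] part_A[OF \<open>x \<in> Ehalf n xb\<close>] part_A'[OF \<open>x \<in> Ehalf n xb\<close>]
    by (auto simp: simrel_iff)
  then show "(x,x) \<in> (simrel n xb A)\<^sup>+" by (rule r_into_trancl)
next
  have "sym (simrel n xb A)" by (auto simp: sym_def simrel_iff pairvec_sym)
  then show "sym ((simrel n xb A)\<^sup>+)" by (rule sym_trancl)
  show "trans ((simrel n xb A)\<^sup>+)" by (rule trans_trancl)
qed

lemma key:
  assumes "(x,y) \<in> equivrel n xb A" "w \<in> Ehalf n xb" "pairvec w x \<in> A"
    "c \<in> Ehalf n xb" "pairvec y c \<in> A"
  shows "(w,c) \<in> equivrel n xb A"
  using assms(1,4,5) unfolding equivrel_def
proof (induction y arbitrary: c rule: trancl_induct)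
  case (base y)
  then obtain b where b: "b \<in> Ehalf n xb" "pairvec x b \<in> A" "pairvec b y \<in> A"
    and xH: "x \<in> Ehalf n xb" and yH: "y \<in> Ehalf n xb" by (auto simp: simrel_iff)
  have "(w,b) \<in> simrel n xb A" using b xH assms(2,3) by (auto simp: simrel_iff)
  moreover have "(b,c) \<in> simrel n xb A" using b yH base.prems by (auto simp: simrel_iff)
  ultimately show ?case by (meson r_into_trancl trancl_into_trancl)
next
  case (step y z)
  then obtain b where b: "b \<in> Ehalf n xb" "pairvec y b \<in> A" "pairvec b z \<in> A"
    and yH: "y \<in> Ehalf n xb" and zH: "z \<in> Ehalf n xb" by (auto simp: simrel_iff)
  have "(w,b) \<in> (simrel n xb A)\<^sup>+" using step.IH[of b] b by simp
  moreover have "(b,c) \<in> simrel n xb A" using b zH step.prems by (auto simp: simrel_iff)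
  ultimately show ?case by (rule trancl_into_trancl)
qed

lemma class_eq:
  assumes "L \<in> Ehalf n xb // equivrel n xb A" "e0 \<in> L"
  shows "L = equivrel n xb A `` {e0}"
proof -
  obtain x where x: "L = equivrel n xb A `` {x}" "x \<in> Ehalf n xb"
    using assms(1) by (rule quotientE)
  then have "(x,e0) \<in> equivrel n xb A" using assms(2) by simp
  then show ?thesis using equiv_class_eq_iff[OF equivR, of x e0] x by simp
qed

lemma class_sub: "L \<in> Ehalf n xb // equivrel n xb A \<Longrightarrow> L \<subseteq> Ehalf n xb"
  using equivR in_quotient_imp_subset by blast

lemma class_ne: "L \<in> Ehalf n xb // equivrel n xb A \<Longrightarrow> \<exists>e0. e0 \<in> L"
proof -
  assume "L \<in> Ehalf n xb // equivrel n xb A"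
  then obtain x where x: "L = equivrel n xb A `` {x}" "x \<in> Ehalf n xb"
    by (rule quotientE)
  then show ?thesis using equiv_class_self[OF equivR x(2)] by blast
qed

lemma dual_eq:
  assumes L: "L \<in> Ehalf n xb // equivrel n xb A" and e0: "e0 \<in> L"
  shows "dual n xb A L = equivrel n xb A `` {part e0}"
    and "neighbours n xb A L \<subseteq> equivrel n xb A `` {part e0}"
proof -
  have LR: "L = equivrel n xb A `` {e0}" by (rule class_eq[OF L e0])
  have e0H: "e0 \<in> Ehalf n xb" using class_sub[OF L] e0 by auto
  show nb: "neighbours n xb A L \<subseteq> equivrel n xb A `` {part e0}"
  proof
    fix b assume "b \<in> neighbours n xb A L"
    then obtain e where b: "b \<in> Ehalf n xb" "e \<in> L" "pairvec e b \<in> A"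
      by (auto simp: neighbours_def)
    have "(e0, e) \<in> equivrel n xb A" using LR b by auto
    then have "(part e0, b) \<in> equivrel n xb A"
      using key[of e0 e "part e0" b] part_in[OF e0H] part_A'[OF e0H] b by auto
    then show "b \<in> equivrel n xb A `` {part e0}" by auto
  qed
  have pn: "part e0 \<in> neighbours n xb A L"
    using part_in[OF e0H] part_A[OF e0H] e0 by (auto simp: neighbours_def)
  show "dual n xb A L = equivrel n xb A `` {part e0}"
    unfolding dual_def circuits_def
  proof (rule the_equality)
    show "equivrel n xb A `` {part e0} \<in> Ehalf n xb // equivrel n xb A \<and>
        neighbours n xb A L \<subseteq> equivrel n xb A `` {part e0}"
      using nb part_in[OF e0H] by (auto intro: quotientI)
    fix L' assume "L' \<in> Ehalf n xb // equivrel n xb A \<and> neighbours n xb A L \<subseteq> L'"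
    then show "L' = equivrel n xb A `` {part e0}" using class_eq[of L' "part e0"] pn by blast
  qed
qed

lemma diff_span:
  assumes L: "L \<in> Ehalf n xb // equivrel n xb A" and x: "x \<in> L"
    and xy: "(x,y) \<in> equivrel n xb A"
  shows "chi {x} - chi {y} \<in> vspan (pairset n xb A L)"
proof -
  obtain e0 where e0: "e0 \<in> L" using class_ne[OF L] by blast
  have nbd: "neighbours n xb A L \<subseteq> dual n xb A L" using dual_eq[OF L e0] by simp
  have mem: "z \<in> L" if "y' \<in> L" "(y',z) \<in> equivrel n xb A" for y' z
    using class_eq[OF L that(1)] that(2) by auto
  have one: "chi {y'} - chi {z} \<in> vspan (pairset n xb A L)"
    if y': "y' \<in> L" and yz: "(y',z) \<in> simrel n xb A" for y' z
  proof -
    obtain b where b: "b \<in> Ehalf n xb" "pairvec y' b \<in> A" "pairvec b z \<in> A"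
      and zH: "z \<in> Ehalf n xb" using yz by (auto simp: simrel_iff)
    have "b \<in> dual n xb A L" using nbd b y' by (auto simp: neighbours_def)
    moreover have "(y',z) \<in> equivrel n xb A" unfolding equivrel_def using yz by (rule r_into_trancl)
    then have "z \<in> L" using mem[OF y'] by blast
    ultimately have "pairvec y' b \<in> pairset n xb A L" "pairvec z b \<in> pairset n xb A L"
      using b y' pairvec_sym[of z b] by (auto simp: pairset_def) (metis)
    then have "pairvec y' b - pairvec z b \<in> vspan (pairset n xb A L)"
      by (intro vec_vs.span_diff vec_vs.span_base)
    moreover have "pairvec y' b - pairvec z b = chi {y'} - chi {z}"
      by (simp add: pairvec_chi)
    ultimately show ?thesis by simp
  qed
  show ?thesis
    using xy unfolding equivrel_def
  proof (induction y rule: trancl_induct)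
    case (base y)
    then show ?case using one[OF x] by blast
  next
    case (step y z)
    have "y \<in> L" using mem[OF x] step(1) by (simp add: equivrel_def)
    then have "chi {y} - chi {z} \<in> vspan (pairset n xb A L)" using one step(2) by simp
    then have "(chi {x} - chi {y}) + (chi {y} - chi {z}) \<in> vspan (pairset n xb A L)"
      using step.IH by (intro vec_vs.span_add)
    moreover have "(chi {x} - chi {y}) + (chi {y} - chi {z}) = chi {x} - chi {z}"
      by (simp add: algebra_simps)
    ultimately show ?case by metis
  qed
qed


lemma main_ctx:
  assumes L: "L \<in> Ehalf n xb // equivrel n xb A"
  shows "vdim (vspan (pairset n xb A L)) =
           (if shorted n xb A L then card L else 2 * card L - 1)"
proof -
  let ?S = "pairset n xb A L"
  let ?M = "dual n xb A L"
  let ?R = "equivrel n xb A"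
  obtain e0 where e0: "e0 \<in> L" using class_ne[OF L] by blast
  have LH: "L \<subseteq> Ehalf n xb" by (rule class_sub[OF L])
  have finL: "finite L" using finite_subset[OF LH finite_Ehalf] .
  have e0H: "e0 \<in> Ehalf n xb" using LH e0 by auto
  have LR: "L = ?R `` {e0}" by (rule class_eq[OF L e0])
  have Meq: "?M = ?R `` {part e0}" and nb: "neighbours n xb A L \<subseteq> ?M"
    using dual_eq[OF L e0] by auto
  have Mq: "?M \<in> Ehalf n xb // ?R" unfolding Meq by (rule quotientI[OF part_in[OF e0H]])
  have MH: "?M \<subseteq> Ehalf n xb" by (rule class_sub[OF Mq])
  have finM: "finite ?M" using finite_subset[OF MH finite_Ehalf] .
  have pLM: "part a \<in> ?M" if "a \<in> L" for a
  proof -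
    have aH: "a \<in> Ehalf n xb" using that LH by auto
    have "part a \<in> neighbours n xb A L" unfolding neighbours_def
      using part_in[OF aH] part_A[OF aH] that by blast
    then show ?thesis using nb by blast
  qed
  have inS: "pairvec e b \<in> ?S" if "e \<in> L" "b \<in> ?M" "pairvec e b \<in> A" for e b
    unfolding pairset_def using that by blast
  show ?thesis
  proof (cases "shorted n xb A L")
    case True
    then have MLq: "?M = L" by (simp add: shorted_def)
    let ?Q = "(\<lambda>a. chi {a}) ` L"
    have "vspan ?S = vspan ?Q"
      unfolding vec_vs.span_eq
    proof
      show "?S \<subseteq> vspan ?Q"
      proof
        fix v assume "v \<in> ?S"
        then obtain e eb where "e \<in> L" "eb \<in> L" "v = chi {e} + chi {eb}"
          unfolding pairset_def pairvec_chi MLq by blast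
        then have "chi {e} \<in> ?Q" "chi {eb} \<in> ?Q" "v = chi {e} + chi {eb}" by auto
        then show "v \<in> vspan ?Q" using vec_vs.span_add vec_vs.span_base by metis
      qed
      show "?Q \<subseteq> vspan ?S"
      proof
        fix q assume "q \<in> ?Q"
        then obtain a where a: "a \<in> L" "q = chi {a}" by auto
        have pa: "part a \<in> L" using pLM[OF a(1)] MLq by simp
        have "(a, part a) \<in> ?R" using class_eq[OF L a(1)] pa by blast
        then have d: "chi {a} - chi {part a} \<in> vspan ?S" by (rule diff_span[OF L a(1)])
        have p: "pairvec a (part a) \<in> vspan ?S"
        proof -
          have aH: "a \<in> Ehalf n xb" using a(1) LH by auto
          have "part a \<in> ?M" using pa MLq by simp
          then show ?thesis using inS[OF a(1) _ part_A[OF aH]] by (intro vec_vs.span_base)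
        qed
        have "vscale (1/2) ((chi {a} - chi {part a}) + pairvec a (part a)) \<in> vspan ?S"
          using d p by (intro vec_vs.span_scale vec_vs.span_add)
        moreover have "vscale (1/2) ((chi {a} - chi {part a}) + pairvec a (part a)) = chi {a}"
          by (simp add: fun_eq_iff vscale_def pairvec_def chi_def)
        ultimately show "q \<in> vspan ?S" using a(2) by metis
      qed
    qed
    then have "vdim (vspan ?S) = card L" using dim_singletons[OF finL] by metis
    then show ?thesis using True by simp
  next
    case False
    then have MLq: "?M \<noteq> L" by (simp add: shorted_def)
    have disj: "L \<inter> ?M = {}" using quotient_disj[OF equivR L Mq] MLq by blast
    have nbM: "c \<in> L" if "b \<in> ?M" "c \<in> Ehalf n xb" "pairvec b c \<in> A" for b c
    proof -
      have "(part e0, b) \<in> ?R" using that Meq by auto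
      then have "(e0, c) \<in> ?R" using key[of "part e0" b e0 c] e0H part_A[OF e0H] that by auto
      then show ?thesis using LR by auto
    qed
    have pML: "part b \<in> L" if "b \<in> ?M" for b
    proof -
      have bH: "b \<in> Ehalf n xb" using that MH by auto
      show ?thesis using nbM[OF that part_in[OF bH] part_A[OF bH]] .
    qed
    have "bij_betw part L ?M"
      by (rule bij_betw_byWitness[where f'=part]) (use pLM pML part_inv LH MH in auto)
    then have cardM: "card ?M = card L" by (simp add: bij_betw_same_card)
    define P where "P = {f :: vec. sum f L = sum f ?M}"
    have subP: "vec_vs.subspace P"
      unfolding vec_vs.subspace_def P_def
      by (auto simp: vscale_def sum.distrib sum_distrib_left[symmetric])
    have SP: "?S \<subseteq> P"
    proof
      fix v assume "v \<in> ?S"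
      then obtain e b where eb: "e \<in> L" "b \<in> ?M" "v = pairvec e b"
        unfolding pairset_def by blast
      have "b \<notin> L" "e \<notin> ?M" using disj eb by auto
      then show "v \<in> P" using eb finL finM
        by (simp add: P_def pairvec_def chi_def sum.distrib)
    qed
    have spanP: "vspan ?S \<subseteq> P" by (rule vec_vs.span_minimal[OF SP subP])
    have "e0 \<notin> ?M" using disj e0 by auto
    then have c0P: "chi {e0} \<notin> P" using e0 finL finM by (simp add: P_def chi_def)
    then have c0: "chi {e0} \<notin> vspan ?S" using spanP by auto
    let ?Q = "(\<lambda>a. chi {a}) ` (L \<union> ?M)"
    let ?T = "insert (chi {e0}) ?S"
    have spT: "vspan ?T = vspan ?Q"
      unfolding vec_vs.span_eq
    proof
      show "?T \<subseteq> vspan ?Q"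
      proof
        fix v assume "v \<in> ?T"
        then consider "v = chi {e0}" | "v \<in> ?S" by auto
        then show "v \<in> vspan ?Q"
        proof cases
          case 1 then show ?thesis using e0 by (auto intro: vec_vs.span_base)
        next
          case 2
          then obtain e b where "e \<in> L" "b \<in> ?M" "v = chi {e} + chi {b}"
            unfolding pairset_def pairvec_chi by blast
          then have "chi {e} \<in> ?Q" "chi {b} \<in> ?Q" "v = chi {e} + chi {b}" by auto
          then show ?thesis using vec_vs.span_add vec_vs.span_base by metis
        qed
      qed
      have sub: "vspan ?S \<subseteq> vspan ?T" by (rule vec_vs.span_mono) auto
      have c0T: "chi {e0} \<in> vspan ?T" by (rule vec_vs.span_base) simp
      have hL: "chi {a} \<in> vspan ?T" if a: "a \<in> L" for a
      proof -
        have "(e0, a) \<in> ?R" using LR a by auto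
        then have d: "chi {e0} - chi {a} \<in> vspan ?T" using diff_span[OF L e0] sub by blast
        have eq: "chi {a} = chi {e0} - (chi {e0} - chi {a})" by simp
        show ?thesis by (subst eq) (rule vec_vs.span_diff[OF c0T d])
      qed
      have hM: "chi {b} \<in> vspan ?T" if b: "b \<in> ?M" for b
      proof -
        have pb: "part b \<in> L" by (rule pML[OF b])
        have "pairvec (part b) b \<in> ?S"
          using inS[OF pb b] part_A'[of b] b MH by blast
        then have "pairvec (part b) b \<in> vspan ?T" using sub vec_vs.span_base by blast
        then have d: "pairvec (part b) b \<in> vspan ?T" .
        have eq: "chi {b} = pairvec (part b) b - chi {part b}" by (simp add: pairvec_chi)
        show ?thesis by (subst eq) (rule vec_vs.span_diff[OF d hL[OF pb]])
      qed
      show "?Q \<subseteq> vspan ?T" using hL hM by auto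
    qed
    obtain B where B: "B \<subseteq> vspan ?S" "vec_vs.independent B" "vspan ?S \<subseteq> vspan B"
      "card B = vdim (vspan ?S)"
      by (rule vec_vs.basis_exists)
    have spB: "vspan B = vspan ?S"
      unfolding vec_vs.span_eq using B(1,3) vec_vs.span_superset by blast
    have c0B: "chi {e0} \<notin> vspan B" using c0 spB by simp
    have indB': "vec_vs.independent (insert (chi {e0}) B)"
      by (rule vec_vs.independent_insertI[OF c0B B(2)])
    have spB': "vspan (insert (chi {e0}) B) = vspan ?T"
      unfolding vec_vs.span_eq
    proof
      have "vspan B \<subseteq> vspan ?T" using spB by (simp add: vec_vs.span_mono subset_insertI vec_vs.span_mono)
      then show "insert (chi {e0}) B \<subseteq> vspan ?T"
        using vec_vs.span_superset[of B] vec_vs.span_base[of "chi {e0}" ?T] by auto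
      have "vspan ?S \<subseteq> vspan (insert (chi {e0}) B)"
        using spB vec_vs.span_mono[of B "insert (chi {e0}) B"] by auto
      then show "?T \<subseteq> vspan (insert (chi {e0}) B)"
        using vec_vs.span_superset[of ?S] vec_vs.span_base[of "chi {e0}" "insert (chi {e0}) B"] by auto
    qed
    have finQ: "finite ?Q" using finL finM by simp
    have "B \<subseteq> vspan ?Q" using spB' spT vec_vs.span_superset[of "insert (chi {e0}) B"] by auto
    then have finB: "finite B" using vec_vs.independent_span_bound[OF finQ B(2)] by simp
    have "chi {e0} \<notin> B" using c0B vec_vs.span_superset[of B] by auto
    then have "card (insert (chi {e0}) B) = card B + 1" using finB by simp
    also have "card (insert (chi {e0}) B) = vdim (vspan (insert (chi {e0}) B))"
      using vec_vs.dim_span_eq_card_independent[OF indB'] by simp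
    also have "\<dots> = vdim (vspan ?Q)" using spB' spT by simp
    also have "\<dots> = card (L \<union> ?M)" by (rule dim_singletons) (use finL finM in simp)
    also have "\<dots> = 2 * card L" using card_Un_disjoint[OF finL finM disj] cardM by simp
    finally show ?thesis using False B(4) by simp
  qed
qed

end


theorem mainTheorem8:
  fixes n :: nat and xb :: vec and A :: "vec set" and L :: "arc set"
  assumes "n \<ge> 4"
    and "xb \<in> Pn n"
    and "\<forall>e\<in>arcs n. xb e \<in> {0, 1/2}"
    and "Dset n xb \<subseteq> A" and "A \<subseteq> Dset n xb \<union> Tset n xb"
    and "L \<in> circuits n xb A"
  shows "vdim (vspan (pairset n xb A L)) =
           (if shorted n xb A L then card L else 2 * card L - 1)"
proof -
  let ?H = "Ehalf n xb"
  have cnt: "card {e \<in> ?H. fst e = u} = 2" if "u \<in> V n" for u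
    using card_out_half[OF assms(2,3) that] .
  have fstV: "fst e \<in> V n" if "e \<in> ?H" for e
  proof -
    have "e \<in> arcs n" using that by (simp add: Ehalf_def)
    then show ?thesis by (cases e) (simp add: arcs_def)
  qed
  have uniq: "\<exists>!p. p \<in> ?H \<and> fst p = fst e \<and> p \<noteq> e" if e: "e \<in> ?H" for e
  proof -
    obtain x y where xy: "{e' \<in> ?H. fst e' = fst e} = {x,y}" "x \<noteq> y"
      using cnt[OF fstV[OF e]] unfolding card_2_iff by blast
    have mem: "(p \<in> ?H \<and> fst p = fst e) \<longleftrightarrow> p \<in> {x,y}" for p
      using xy(1)[unfolded set_eq_iff, rule_format, of p] by simp
    have "e \<in> {x,y}" using mem[of e] e by blast
    have m1: "p = x \<or> p = y" if "p \<in> ?H" "fst p = fst e" for p using mem[of p] that by blast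
    have m2: "x \<in> ?H" "fst x = fst e" "y \<in> ?H" "fst y = fst e" using mem[of x] mem[of y] by simp_all
    from \<open>e \<in> {x,y}\<close> have "e = x \<or> e = y" by simp
    then show ?thesis
    proof
      assume "e = x" then show ?thesis using m1 m2 xy(2) by (intro ex1I[of _ y]) blast+
    next
      assume "e = y" then show ?thesis using m1 m2 xy(2) by (intro ex1I[of _ x]) blast+
    qed
  qed
  define part where "part e = (THE p. p \<in> ?H \<and> fst p = fst e \<and> p \<noteq> e)" for e
  have pp: "part e \<in> ?H \<and> fst (part e) = fst e \<and> part e \<noteq> e" if "e \<in> ?H" for e
    unfolding part_def using theI'[OF uniq[OF that]] .
  have pu: "a = part e" if "e \<in> ?H" "a \<in> ?H" "fst a = fst e" "a \<noteq> e" for a e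
    unfolding part_def using the1_equality[OF uniq[OF that(1)]] that by simp
  have pinv: "part (part e) = e" if "e \<in> ?H" for e
    using pu[of "part e" e] pp[OF that] that by metis
  have pA: "pairvec e (part e) \<in> A" if e: "e \<in> ?H" for e
  proof -
    have pe: "part e \<in> ?H" "fst (part e) = fst e" "part e \<noteq> e" using pp[OF e] by auto
    have "pairvec e (part e) = pr n xb (chi (delta_out n (fst e)))"
    proof (rule ext)
      fix a
      have l: "pairvec e (part e) a = (if a = e then 1 else 0) + (if a = part e then 1 else 0)"
        by (simp add: pairvec_def chi_def)
      have r: "pr n xb (chi (delta_out n (fst e))) a =
          (if a \<in> ?H then (if a \<in> arcs n \<and> fst a = fst e then 1 else 0) else 0)"
        by (simp add: pr_def chi_def mem_delta_out)
      show "pairvec e (part e) a = pr n xb (chi (delta_out n (fst e))) a"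
      proof (cases "a \<in> ?H")
        case True
        have aA: "a \<in> arcs n" using True by (simp add: Ehalf_def)
        show ?thesis
        proof (cases "fst a = fst e")
          case True2: True
          have "a = e \<or> a = part e" using pu[OF e True True2] by blast
          then show ?thesis unfolding l r using pe(3) True True2 aA by auto
        next
          case False
          then have "a \<noteq> e" "a \<noteq> part e" using pe by auto
          then show ?thesis unfolding l r using False by simp
        qed
      next
        case False
        then have "a \<noteq> e" "a \<noteq> part e" using pe e by auto
        then show ?thesis unfolding l r using False by simp
      qed
    qed
    moreover have "pr n xb (chi (delta_out n (fst e))) \<in> Dset n xb"
      unfolding Dset_def using fstV[OF e] by blast
    ultimately show ?thesis using assms(4) by auto
  qed
  have L': "L \<in> ?H // equivrel n xb A" using assms(6) by (simp add: circuits_def)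
  show ?thesis
  proof (rule main_ctx[where part=part])
    show "\<And>e. e \<in> ?H \<Longrightarrow> part e \<in> ?H" using pp by blast
    show "\<And>e. e \<in> ?H \<Longrightarrow> part e \<noteq> e" using pp by blast
    show "\<And>e. e \<in> ?H \<Longrightarrow> part (part e) = e" by (rule pinv)
    show "\<And>e. e \<in> ?H \<Longrightarrow> pairvec e (part e) \<in> A" by (rule pA)
    show "L \<in> ?H // equivrel n xb A" by (rule L')
  qed
qed

end
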